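(* Let $G\ge 2$ and $p_t\in(0,1)$. Let $r_{t,1},\dots,r_{t,G}$ be i.i.d. $\mathrm{Bernoulli}(p_t)$, $R=\sum_j r_{t,j}$, $\hat p_t=R/G$, $\mathcal S=\{1\le R\le G-1\}$, and for a real constant $c$ let $\tilde p_t=c\,\hat p_t$. Let $\epsilon\in(0,|p_t-\hat p_t|)$. If \[ c\in\left(\frac{(p_t-\epsilon)\bigl(1-(1-p_t)^G-p_t^G\bigr)}{p_t(1-p_t^{G-1})},\ \frac{(p_t+\epsilon)\bigl(1-(1-p_t)^G-p_t^G\bigr)}{p_t(1-p_t^{G-1})}\right), \] then $\mathbb E[\tilde p_t\mid\mathcal S]\in(p_t-\epsilon,\ p_t+\epsilon)$.
   Context: Binary-reward group setting: $p_t$ is the expected reward, $\hat p_t$ the group baseline, $\tilde p_t$ the rescaled baseline, $\mathcal S$ the event that the group rewards are not all equal. *)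

theory Defs
  imports "HOL-Probability.Probability"
begin

definition bern_group :: "nat \<Rightarrow> real \<Rightarrow> (nat \<Rightarrow> bool) pmf" where
  "bern_group G p = Pi_pmf {..<G} False (\<lambda>_. bernoulli_pmf p)"

definition num_correct :: "nat \<Rightarrow> (nat \<Rightarrow> bool) \<Rightarrow> nat" where
  "num_correct G \<omega> = card {j \<in> {..<G}. \<omega> j}"

definition phat :: "nat \<Rightarrow> (nat \<Rightarrow> bool) \<Rightarrow> real" where
  "phat G \<omega> = real (num_correct G \<omega>) / real G"

definition nondeg_event :: "nat \<Rightarrow> (nat \<Rightarrow> bool) set" where
  "nondeg_event G = {\<omega>. 1 \<le> num_correct G \<omega> \<and> num_correct G \<omega> \<le> G - 1}"

definition cond_exp_S :: "nat \<Rightarrow> real \<Rightarrow> ((nat \<Rightarrow> bool) \<Rightarrow> real) \<Rightarrow> real" where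
  "cond_exp_S G p X =
     measure_pmf.expectation (cond_pmf (bern_group G p) (nondeg_event G)) X"

end

theory Submission
  imports Defs
begin

lemma bg_finite: "finite (set_pmf (bern_group G p))"
proof -
  have "set_pmf (bern_group G p) \<subseteq> PiE_dflt {..<G} False (\<lambda>_. UNIV)"
    using set_Pi_pmf_subset[of "{..<G}" False "\<lambda>_. bernoulli_pmf p"]
    unfolding bern_group_def PiE_dflt_def by auto
  moreover have "finite (PiE_dflt {..<G} False (\<lambda>_. (UNIV::bool set)))" by auto
  ultimately show ?thesis using finite_subset by blast
qed

lemma bg_binom:
  assumes "0 \<le> p" "p \<le> 1"
  shows "map_pmf (num_correct G) (bern_group G p) = binomial_pmf G p"
  using binomial_pmf_altdef'[of "{..<G}" G p False] assms
  unfolding bern_group_def num_correct_def by auto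

lemma mean_num:
  assumes "0 \<le> p" "p \<le> 1"
  shows "measure_pmf.expectation (bern_group G p) (\<lambda>\<omega>. real (num_correct G \<omega>)) = real G * p"
proof -
  have eq: "real (num_correct G \<omega>) = (\<Sum>j<G. (if \<omega> j then 1 else 0))" for \<omega>
    unfolding num_correct_def by (auto simp: sum.If_cases intro!: arg_cong[where f=card])
  have "measure_pmf.expectation (bern_group G p) (\<lambda>\<omega>. real (num_correct G \<omega>))
     = (\<Sum>j<G. measure_pmf.expectation (bern_group G p) (\<lambda>\<omega>. (if \<omega> j then 1 else 0::real)))"
    unfolding eq
    by (rule Bochner_Integration.integral_sum) (auto intro: integrable_measure_pmf_finite bg_finite)
  also have "\<dots> = (\<Sum>j<G. p)"
  proof (rule sum.cong[OF refl])
    fix j assume j: "j \<in> {..<G}"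
    have "measure_pmf.expectation (bern_group G p) (\<lambda>\<omega>. (if \<omega> j then 1 else 0::real))
      = measure_pmf.expectation (map_pmf (\<lambda>\<omega>. \<omega> j) (bern_group G p)) (\<lambda>b. (if b then 1 else 0::real))"
      by simp
    also have "map_pmf (\<lambda>\<omega>. \<omega> j) (bern_group G p) = bernoulli_pmf p"
      unfolding bern_group_def using Pi_pmf_component[of "{..<G}" j False] j by simp
    finally show "measure_pmf.expectation (bern_group G p) (\<lambda>\<omega>. (if \<omega> j then 1 else 0::real)) = p"
      using assms by simp
  qed
  finally show ?thesis by simp
qed

lemma mean_binom:
  assumes "0 \<le> p" "p \<le> 1"
  shows "(\<Sum>k\<le>G. pmf (binomial_pmf G p) k * real k) = real G * p"
proof -
  have "(\<Sum>k\<le>G. pmf (binomial_pmf G p) k * real k) = measure_pmf.expectation (binomial_pmf G p) real"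
    using assms by (subst integral_measure_pmf[where A="{..G}"]) (auto simp: set_pmf_binomial_eq split: if_splits)
  also have "\<dots> = measure_pmf.expectation (bern_group G p) (\<lambda>\<omega>. real (num_correct G \<omega>))"
    by (subst bg_binom[symmetric, OF assms]) simp
  finally show ?thesis using mean_num[OF assms] by simp
qed

lemma total_binom:
  assumes "0 \<le> p" "p \<le> 1"
  shows "(\<Sum>k\<le>G. pmf (binomial_pmf G p) k) = 1"
proof -
  have "(\<Sum>k\<le>G. pmf (binomial_pmf G p) k) = measure_pmf.prob (binomial_pmf G p) {..G}"
    by (simp add: measure_measure_pmf_finite)
  also have "\<dots> = 1" using assms
    by (subst measure_pmf.prob_eq_1) (auto simp: AE_measure_pmf_iff set_pmf_binomial_eq split: if_splits)
  finally show ?thesis .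
qed

lemma split_sum:
  fixes G :: nat
  assumes "G \<ge> 1"
  shows "(\<Sum>k\<le>G. f k) = f 0 + (\<Sum>k\<in>{1..G-1}. f k) + (f G :: real)"
proof -
  have "{..G} = insert 0 (insert G {1..G-1})" proof (intro set_eqI)
    fix x :: nat
    have "x \<le> G \<longleftrightarrow> x = 0 \<or> x = G \<or> (1 \<le> x \<and> x \<le> G - 1)" using assms by arith
    then show "x \<in> {..G} \<longleftrightarrow> x \<in> insert 0 (insert G {1..G-1})" by auto
  qed
  then show ?thesis using assms by (simp add: algebra_simps)
qed

theorem lemma3:
  fixes G :: nat and p c \<epsilon> :: real
  assumes "G \<ge> 2" and "0 < p" and "p < 1"
    and "0 < \<epsilon>" and "\<epsilon> < \<bar>p - cond_exp_S G p (phat G)\<bar>"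
    and "(p - \<epsilon>) * (1 - (1 - p) ^ G - p ^ G) / (p * (1 - p ^ (G - 1))) < c"
    and "c < (p + \<epsilon>) * (1 - (1 - p) ^ G - p ^ G) / (p * (1 - p ^ (G - 1)))"
  shows "cond_exp_S G p (\<lambda>\<omega>. c * phat G \<omega>) \<in> {p - \<epsilon> <..< p + \<epsilon>}"
proof -
  define B where "B = binomial_pmf G p"
  define T where "T = {k::nat. 1 \<le> k \<and> k \<le> G - 1}"
  have p01: "0 \<le> p" "p \<le> 1" using assms by auto
  have T: "T = {1..G-1}" unfolding T_def by auto
  have nd: "nondeg_event G = num_correct G -` T" unfolding nondeg_event_def T_def by auto
  have ne: "set_pmf (bern_group G p) \<inter> num_correct G -` T \<noteq> {}"
  proof -
    have "1 \<in> set_pmf B" unfolding B_def using assms by simp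
    then obtain \<omega> where "\<omega> \<in> set_pmf (bern_group G p)" "num_correct G \<omega> = 1"
      unfolding B_def bg_binom[symmetric, OF p01] by auto
    moreover have "1 \<in> T" using assms unfolding T_def by auto
    ultimately show ?thesis by auto
  qed
  have ce: "cond_exp_S G p (\<lambda>\<omega>. f (num_correct G \<omega>)) = measure_pmf.expectation (cond_pmf B T) f"
    for f :: "nat \<Rightarrow> real"
  proof -
    have "cond_pmf B T = map_pmf (num_correct G) (cond_pmf (bern_group G p) (num_correct G -` T))"
      unfolding B_def bg_binom[symmetric, OF p01] by (rule cond_map_pmf[OF ne])
    then show ?thesis unfolding cond_exp_S_def nd by simp
  qed
  have neB: "set_pmf B \<inter> T \<noteq> {}" using ne unfolding B_def bg_binom[symmetric, OF p01] by auto
  define a where "a k = pmf B k" for k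
  define N where "N = (\<Sum>k\<in>{1..G-1}. a k)"
  have measT: "measure_pmf.prob B T = N" unfolding N_def a_def T
    by (simp add: measure_measure_pmf_finite)
  have ce2: "measure_pmf.expectation (cond_pmf B T) f = (\<Sum>k\<in>{1..G-1}. a k * f k) / N" for f :: "nat \<Rightarrow> real"
  proof -
    have "measure_pmf.expectation (cond_pmf B T) f = (\<Sum>k\<in>{1..G-1}. pmf (cond_pmf B T) k * f k)"
      using neB by (subst integral_measure_pmf[where A="{1..G-1}"]) (auto simp: T)
    also have "\<dots> = (\<Sum>k\<in>{1..G-1}. a k * f k / N)"
      proof (rule sum.cong[OF refl])
      fix k assume k: "k \<in> {1..G-1}"
      have "pmf (cond_pmf B T) k = a k / N" using pmf_cond[OF neB, of k] measT k unfolding a_def T by simp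
      then show "pmf (cond_pmf B T) k * f k = a k * f k / N" by simp
    qed
    finally show ?thesis by (simp add: sum_divide_distrib)
  qed
  have a0: "a 0 = (1 - p) ^ G" unfolding a_def B_def using p01 by simp
  have aG: "a G = p ^ G" unfolding a_def B_def using p01 by simp
  have tot: "(\<Sum>k\<le>G. a k) = 1" unfolding a_def B_def by (rule total_binom[OF p01])
  have mean: "(\<Sum>k\<le>G. a k * real k) = real G * p" unfolding a_def B_def by (rule mean_binom[OF p01])
  have G1: "G \<ge> 1" using assms by simp
  have NN: "N = 1 - (1 - p) ^ G - p ^ G"
    using split_sum[OF G1, of a] tot a0 aG unfolding N_def by simp
  have M: "(\<Sum>k\<in>{1..G-1}. a k * (real k / real G)) = p - p ^ G"
  proof -
    have "(\<Sum>k\<in>{1..G-1}. a k * real k) = real G * p - real G * p ^ G"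
      using split_sum[OF G1, of "\<lambda>k. a k * real k"] mean aG by simp
    then have "(\<Sum>k\<in>{1..G-1}. a k * real k) / real G = p - p ^ G" using G1 by (simp add: field_simps)
    then show ?thesis by (simp add: sum_divide_distrib)
  qed
  have Npos: "N > 0"
  proof -
    have "\<forall>k\<in>{1..G-1}. a k > 0" unfolding a_def B_def using assms by (auto simp: pmf_positive_iff)
    moreover have "{1..G-1} \<noteq> {}" using assms by auto
    ultimately show ?thesis unfolding N_def by (intro sum_pos) auto
  qed
  have K: "cond_exp_S G p (\<lambda>\<omega>. c * phat G \<omega>) = c * ((p - p ^ G) / N)"
  proof -
    have "cond_exp_S G p (\<lambda>\<omega>. c * phat G \<omega>) = c * cond_exp_S G p (phat G)"
      unfolding cond_exp_S_def by simp
    also have "cond_exp_S G p (phat G) = (p - p ^ G) / N"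
      using ce[of "\<lambda>k. real k / real G"] ce2[of "\<lambda>k. real k / real G"] M
      unfolding phat_def by simp
    finally show ?thesis .
  qed
  have D: "p - p ^ G = p * (1 - p ^ (G - 1))"
    using G1 by (cases G) (auto simp: algebra_simps)
  have Dpos: "p * (1 - p ^ (G - 1)) > 0"
  proof -
    have "Suc (G - 2) = G - 1" using assms by simp
    then have "p ^ (G - 1) < 1" using power_Suc_less_one[of p "G - 2"] assms by metis
    then show ?thesis using assms by simp
  qed
  have l: "(p - \<epsilon>) * N / (p * (1 - p ^ (G - 1))) < c" and u: "c < (p + \<epsilon>) * N / (p * (1 - p ^ (G - 1)))"
    using assms(6,7) NN by simp_all
  show ?thesis unfolding K D using l u Npos Dpos
    by (simp add: field_simps)
qed

end
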